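(* For every simple, undirected, connected graph $\Gamma$ with at least two vertices, there exists a triple Roman dominating function of $\Gamma$ of minimum weight $\gamma_{[3R]}(\Gamma)$ that assigns the value $1$ to no vertex.
   Context: For a graph $\Gamma=(V,E)$ and $h:V\to\{0,1,2,3,4\}$, let $AN(v)=\{w\in N(v):h(w)\ge 1\}$, $AN[v]=AN(v)\cup\{v\}$ and $h(S)=\sum_{u\in S}h(u)$. $h$ is a triple Roman dominating function (3RDF) if every $v$ with $h(v)<3$ satisfies $h(AN[v])\ge|AN(v)|+3$. The triple Roman domination number $\gamma_{[3R]}(\Gamma)$ is the minimum weight $h(V)$ of a 3RDF of $\Gamma$. *)

theory Defs
  imports Main
begin

definition simple_graph :: "'a set \<Rightarrow> ('a \<Rightarrow> 'a \<Rightarrow> bool) \<Rightarrow> bool" where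
  "simple_graph V E \<longleftrightarrow> finite V \<and> (\<forall>u v. E u v \<longrightarrow> u \<in> V \<and> v \<in> V)
     \<and> (\<forall>u v. E u v \<longrightarrow> E v u) \<and> (\<forall>v. \<not> E v v)"

definition connected_graph :: "'a set \<Rightarrow> ('a \<Rightarrow> 'a \<Rightarrow> bool) \<Rightarrow> bool" where
  "connected_graph V E \<longleftrightarrow> (\<forall>u\<in>V. \<forall>v\<in>V. (u, v) \<in> {(x, y). E x y}\<^sup>*)"

definition nbhd :: "('a \<Rightarrow> 'a \<Rightarrow> bool) \<Rightarrow> 'a \<Rightarrow> 'a set" where
  "nbhd E v = {w. E v w}"

definition AN :: "('a \<Rightarrow> 'a \<Rightarrow> bool) \<Rightarrow> ('a \<Rightarrow> nat) \<Rightarrow> 'a \<Rightarrow> 'a set" where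
  "AN E h v = {w \<in> nbhd E v. h w \<ge> 1}"

definition weight :: "'a set \<Rightarrow> ('a \<Rightarrow> nat) \<Rightarrow> nat" where
  "weight S h = (\<Sum>u\<in>S. h u)"

text \<open>Triple Roman dominating function h : V \<rightarrow> {0,...,4}. Values outside V are
  irrelevant; we require h to be 0 outside V so that functions correspond to maps on V.\<close>
definition is_3RDF :: "'a set \<Rightarrow> ('a \<Rightarrow> 'a \<Rightarrow> bool) \<Rightarrow> ('a \<Rightarrow> nat) \<Rightarrow> bool" where
  "is_3RDF V E h \<longleftrightarrow> (\<forall>v\<in>V. h v \<le> 4) \<and> (\<forall>v. v \<notin> V \<longrightarrow> h v = 0)
     \<and> (\<forall>v\<in>V. h v < 3 \<longrightarrow> weight (insert v (AN E h v)) h \<ge> card (AN E h v) + 3)"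

definition gamma_3R :: "'a set \<Rightarrow> ('a \<Rightarrow> 'a \<Rightarrow> bool) \<Rightarrow> nat" where
  "gamma_3R V E = Min {weight V h | h. is_3RDF V E h}"

end

theory Submission
  imports Defs
begin

definition FF :: "('a \<Rightarrow> 'a \<Rightarrow> bool) \<Rightarrow> ('a \<Rightarrow> nat) \<Rightarrow> 'a \<Rightarrow> nat" where
  "FF E h u = h u + (\<Sum>x\<in>nbhd E u. h x - 1)"

lemma cond_iff:
  assumes fin: "finite (nbhd E u)" and irr: "\<not> E u u"
  shows "(weight (insert u (AN E h u)) h \<ge> card (AN E h u) + 3) \<longleftrightarrow> FF E h u \<ge> 3"
proof -
  let ?A = "AN E h u"
  have sub: "?A \<subseteq> nbhd E u" unfolding AN_def by auto
  have finA: "finite ?A" using fin sub finite_subset by blast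
  have notin: "u \<notin> ?A" using irr unfolding AN_def nbhd_def by auto
  have w: "weight (insert u ?A) h = h u + sum h ?A"
    unfolding weight_def using finA notin by simp
  have s1: "sum h ?A = (\<Sum>x\<in>?A. h x - 1) + card ?A"
  proof -
    have "sum h ?A = (\<Sum>x\<in>?A. (h x - 1) + 1)"
      by (rule sum.cong) (auto simp: AN_def)
    also have "\<dots> = (\<Sum>x\<in>?A. h x - 1) + (\<Sum>x\<in>?A. 1)"
      by (rule sum.distrib)
    also have "\<dots> = (\<Sum>x\<in>?A. h x - 1) + card ?A" by simp
    finally show ?thesis .
  qed
  have s2: "(\<Sum>x\<in>nbhd E u. h x - 1) = (\<Sum>x\<in>?A. h x - 1)"
    by (rule sum.mono_neutral_right[OF fin sub]) (auto simp: AN_def nbhd_def)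
  show ?thesis unfolding FF_def using w s1 s2 by auto
qed

lemma weight_le2:
  assumes "finite V" "v \<in> V" "w \<in> V" "v \<noteq> w" "\<forall>x\<in>V-{v,w}. g x = h x"
    "g v + g w \<le> h v + h w"
  shows "weight V g \<le> weight V h"
proof -
  have "\<And>f. weight V f = f v + f w + sum f (V - {v,w})"
  proof -
    fix f :: "'a \<Rightarrow> nat"
    have "sum f V = f v + sum f (V - {v})" using assms(1,2) by (simp add: sum.remove)
    also have "sum f (V - {v}) = f w + sum f (V - {v} - {w})"
      using assms(1,3,4) by (simp add: sum.remove)
    also have "V - {v} - {w} = V - {v,w}" by auto
    finally show "weight V f = f v + f w + sum f (V - {v,w})" unfolding weight_def by simp
  qed
  moreover have "sum g (V - {v,w}) = sum h (V - {v,w})"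
    using assms(5) by (intro sum.cong) auto
  ultimately show ?thesis using assms(6) by simp
qed

lemma step_ok:
  assumes sg: "simple_graph V E" and h: "is_3RDF V E h" and v: "v \<in> V" and hv: "h v = 1"
    and gv: "g v = 0" and mono: "\<forall>x. x \<noteq> v \<longrightarrow> h x \<le> g x"
    and g4: "\<forall>x\<in>V. g x \<le> 4" and g0: "\<forall>x. x \<notin> V \<longrightarrow> g x = 0"
    and Fv: "FF E g v \<ge> 3"
  shows "is_3RDF V E g"
proof -
  have fin: "\<And>u. finite (nbhd E u)" using sg unfolding simple_graph_def nbhd_def
    by (metis (no_types, lifting) finite_subset mem_Collect_eq subsetI)
  have irr: "\<And>u. \<not> E u u" using sg unfolding simple_graph_def by auto
  have "FF E g u \<ge> 3" if u: "u \<in> V" "g u < 3" for u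
  proof (cases "u = v")
    case True then show ?thesis using Fv by simp
  next
    case False
    then have "h u < 3" using mono u by (meson le_less_trans)
    then have "FF E h u \<ge> 3" using h u cond_iff[OF fin irr] unfolding is_3RDF_def by blast
    moreover have "FF E h u \<le> FF E g u"
      unfolding FF_def
    proof (rule add_mono)
      show "h u \<le> g u" using mono False by auto
      show "(\<Sum>x\<in>nbhd E u. h x - 1) \<le> (\<Sum>x\<in>nbhd E u. g x - 1)"
      proof (rule sum_mono)
        fix x
        show "h x - 1 \<le> g x - 1"
        proof (cases "x = v")
          case True thus ?thesis using hv by simp
        next
          case False thus ?thesis using mono by (simp add: diff_le_mono)
        qed
      qed
    qed
    ultimately show ?thesis by linarith
  qed
  then show ?thesis using g4 g0 cond_iff[OF fin irr] unfolding is_3RDF_def by blast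
qed

lemma reduce:
  assumes sg: "simple_graph V E"
  shows "\<forall>h. is_3RDF V E h \<longrightarrow> card {x\<in>V. h x = 1} = n \<longrightarrow>
     (\<exists>g. is_3RDF V E g \<and> weight V g \<le> weight V h \<and> (\<forall>v\<in>V. g v \<noteq> 1))"
proof (induction n rule: less_induct)
  case (less n)
  show ?case
  proof (intro allI impI)
    fix h assume h: "is_3RDF V E h" and cn: "card {x\<in>V. h x = 1} = n"
    have finV: "finite V" using sg unfolding simple_graph_def by auto
    have fin: "\<And>u. finite (nbhd E u)" using sg unfolding simple_graph_def nbhd_def
      by (metis (no_types, lifting) finite_subset mem_Collect_eq subsetI)
    have irr: "\<And>u. \<not> E u u" using sg unfolding simple_graph_def by auto
    have inV: "\<And>u w. E u w \<Longrightarrow> w \<in> V" using sg unfolding simple_graph_def by auto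
    show "\<exists>g. is_3RDF V E g \<and> weight V g \<le> weight V h \<and> (\<forall>v\<in>V. g v \<noteq> 1)"
    proof (cases "\<forall>v\<in>V. h v \<noteq> 1")
      case True then show ?thesis using h by blast
    next
      case False
      then obtain v where v: "v \<in> V" "h v = 1" by blast
      have F: "FF E h v \<ge> 3" using h v cond_iff[OF fin irr] unfolding is_3RDF_def by auto
      hence S: "(\<Sum>x\<in>nbhd E v. h x - 1) \<ge> 2" unfolding FF_def using v by simp
      have h4: "\<forall>x\<in>V. h x \<le> 4" and h0: "\<forall>x. x \<notin> V \<longrightarrow> h x = 0"
        using h unfolding is_3RDF_def by auto
      obtain g w where g: "is_3RDF V E g" "w \<in> V" "w \<noteq> v" "g v = 0"
        "\<forall>x\<in>V-{v,w}. g x = h x" "g v + g w \<le> h v + h w" "g w \<noteq> 1"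
      proof (cases "\<exists>w\<in>nbhd E v. h w = 4")
        case True
        then obtain w where w: "E v w" "h w = 4" unfolding nbhd_def by auto
        define g where "g = h(v := 0)"
        have "(\<Sum>x\<in>nbhd E v. g x - 1) \<ge> g w - 1"
          by (rule member_le_sum) (use w fin in \<open>auto simp: nbhd_def\<close>)
        moreover have "g w = 4" using w irr g_def by auto
        ultimately have "FF E g v \<ge> 3" unfolding FF_def by simp
        hence "is_3RDF V E g"
          by (intro step_ok[OF sg h v]) (use h4 h0 v in \<open>auto simp: g_def\<close>)
        then show ?thesis
          using that[of g w] w irr inV v by (auto simp: g_def)
      next
        case False
        have "\<exists>w\<in>nbhd E v. h w \<ge> 2"
        proof (rule ccontr)
          assume "\<not> ?thesis"
          hence "(\<Sum>x\<in>nbhd E v. h x - 1) = 0" by (intro sum.neutral) auto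
          thus False using S by simp
        qed
        then obtain w where w: "E v w" "h w \<ge> 2" unfolding nbhd_def by auto
        have w3: "h w \<le> 3" using False w h4 inV unfolding nbhd_def by force
        define g where "g = h(v := 0, w := h w + 1)"
        have wv: "w \<noteq> v" using w irr by auto
        have "(\<Sum>x\<in>nbhd E v. g x - 1) = (\<Sum>x\<in>nbhd E v. h x - 1) + 1"
        proof -
          have wn: "w \<in> nbhd E v" using w by (simp add: nbhd_def)
          have vn: "v \<notin> nbhd E v" using irr by (simp add: nbhd_def)
          have "(\<Sum>x\<in>nbhd E v. g x - 1) = (g w - 1) + (\<Sum>x\<in>nbhd E v - {w}. g x - 1)"
            using fin wn by (simp add: sum.remove)
          also have "(\<Sum>x\<in>nbhd E v - {w}. g x - 1) = (\<Sum>x\<in>nbhd E v - {w}. h x - 1)"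
            by (rule sum.cong) (use vn in \<open>auto simp: g_def\<close>)
          also have "(\<Sum>x\<in>nbhd E v. h x - 1) = (h w - 1) + (\<Sum>x\<in>nbhd E v - {w}. h x - 1)"
            using fin wn by (simp add: sum.remove)
          moreover have "g w - 1 = h w - 1 + 1" using w by (simp add: g_def)
          ultimately show ?thesis by simp
        qed
        hence "FF E g v \<ge> 3" unfolding FF_def using S wv by (simp add: g_def)
        hence "is_3RDF V E g"
          by (intro step_ok[OF sg h v]) (use h4 h0 v w w3 inV wv in \<open>auto simp: g_def\<close>)
        then show ?thesis
          using that[of g w] w wv inV v by (auto simp: g_def)
      qed
      have sub: "{x\<in>V. g x = 1} \<subseteq> {x\<in>V. h x = 1} - {v}"
      proof
        fix x assume x: "x \<in> {x\<in>V. g x = 1}"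
        hence "x \<noteq> v" "x \<noteq> w" using g(4,7) by auto
        hence "h x = g x" using g(5) x by auto
        thus "x \<in> {x\<in>V. h x = 1} - {v}" using x \<open>x \<noteq> v\<close> by auto
      qed
      have "card {x\<in>V. g x = 1} < n"
      proof -
        have "card {x\<in>V. g x = 1} \<le> card ({x\<in>V. h x = 1} - {v})"
          by (rule card_mono) (use finV sub in auto)
        also have "\<dots> < n" unfolding cn[symmetric]
          by (rule card_Diff1_less) (use v finV in auto)
        finally show ?thesis .
      qed
      then obtain g' where g': "is_3RDF V E g'" "weight V g' \<le> weight V g" "\<forall>v\<in>V. g' v \<noteq> 1"
        using less g(1) by blast
      have "weight V g \<le> weight V h"
        by (rule weight_le2[OF finV v(1) g(2) g(3)[symmetric] g(5) g(6)])
      then show ?thesis using g' by (meson le_trans)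
    qed
  qed
qed

theorem proposition17:
  fixes V :: "'a set" and E :: "'a \<Rightarrow> 'a \<Rightarrow> bool"
  assumes "simple_graph V E" and "connected_graph V E" and "card V \<ge> 2"
  shows "\<exists>h. is_3RDF V E h \<and> weight V h = gamma_3R V E \<and> (\<forall>v\<in>V. h v \<noteq> 1)"
proof -
  have finV: "finite V" using assms(1) unfolding simple_graph_def by auto
  let ?W = "{weight V h | h. is_3RDF V E h}"
  define h3 where "h3 = (\<lambda>x. if x \<in> V then 3 else (0::nat))"
  have "is_3RDF V E h3" unfolding is_3RDF_def h3_def by auto
  hence ne: "?W \<noteq> {}" by blast
  have "?W \<subseteq> {..4 * card V}"
  proof
    fix x assume "x \<in> ?W"
    then obtain h where h: "is_3RDF V E h" "x = weight V h" by blast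
    have "weight V h \<le> (\<Sum>u\<in>V. 4)" unfolding weight_def
      by (rule sum_mono) (use h in \<open>auto simp: is_3RDF_def\<close>)
    thus "x \<in> {..4 * card V}" using h by simp
  qed
  hence finW: "finite ?W" using finite_subset by blast
  have "gamma_3R V E \<in> ?W" unfolding gamma_3R_def using Min_in[OF finW ne] .
  then obtain h where h: "is_3RDF V E h" "weight V h = gamma_3R V E" by auto
  obtain g where g: "is_3RDF V E g" "weight V g \<le> weight V h" "\<forall>v\<in>V. g v \<noteq> 1"
    using reduce[OF assms(1)] h(1) by blast
  have "gamma_3R V E \<le> weight V g" unfolding gamma_3R_def
    by (rule Min_le[OF finW]) (use g in blast)
  thus ?thesis using g h by auto
qed

end
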